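(* Let $\Bbbk$ be a field of characteristic zero. For all $n\ge-1$, $$\dim\frac{\mathcal F_n\mathcal O}{[\mathcal F_n\mathcal O,\mathcal F_n\mathcal O]}=n+3,\qquad \dim\frac{\mathcal F_n\mathfrak b}{[\mathcal F_n\mathfrak b,\mathcal F_n\mathfrak b]}=2n+4.$$
   Context: The centreless BCCA $\mathfrak b=\mathcal O\ltimes\mathcal P$ has basis $\{\mathcal U_n,\mathcal V_n\mid n\ge-1\}$ ($\mathcal O=\mathrm{span}\{\mathcal U_n\}$, $\mathcal P=\mathrm{span}\{\mathcal V_n\}$) with $[\mathcal U_n,\mathcal U_m]=(n-m)(\mathcal U_{n+m+2}-4\mathcal U_{n+m})$, $[\mathcal U_n,\mathcal V_m]=(n-m+1)\mathcal V_{n+m+2}-4(n-m)\mathcal V_{n+m}$, $[\mathcal V_n,\mathcal V_m]=0$ (concretely, with $s=t+t^{-1}$, $\mathcal U_n=-s^{n+1}(t^2-1)\partial$ in the Witt algebra $\Bbbk[t,t^{-1}]\partial$ and $\mathcal V_n=-s^{n+1}t\,dt^{-1}$ in the tensor density module $t\Bbbk[t,t^{-1}]dt^{-1}$). For $n\ge-1$, $\mathcal F_n\mathcal O=\mathrm{span}\{\mathcal U_k\mid k\ge n\}$ and $\mathcal F_n\mathfrak b=\mathrm{span}\{\mathcal U_k,\mathcal V_k\mid k\ge n\}$. *)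

theory Defs
  imports Complex_Main "HOL-Library.Function_Algebras" "HOL-Library.Product_Plus"
begin

text \<open>Elements of O are coefficient functions int => k (coefficient of U_i at i);
  elements of b = O |x P are pairs (coefficients of U_i, coefficients of V_i).
  All elements we consider are finite linear combinations of basis vectors.\<close>

definition fscale :: "'k::field \<Rightarrow> (int \<Rightarrow> 'k) \<Rightarrow> (int \<Rightarrow> 'k)" where
  "fscale c f = (\<lambda>i. c * f i)"

definition pscale :: "'k::field \<Rightarrow> (int \<Rightarrow> 'k) \<times> (int \<Rightarrow> 'k) \<Rightarrow> (int \<Rightarrow> 'k) \<times> (int \<Rightarrow> 'k)" where
  "pscale c p = (fscale c (fst p), fscale c (snd p))"

definition bvec :: "int \<Rightarrow> int \<Rightarrow> 'k::field" where
  "bvec n = (\<lambda>i. if i = n then 1 else 0)"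

definition suppf :: "(int \<Rightarrow> 'k::field) \<Rightarrow> int set" where
  "suppf f = {i. f i \<noteq> 0}"

definition brUU :: "int \<Rightarrow> int \<Rightarrow> (int \<Rightarrow> 'k::field)" where
  "brUU n m = fscale (of_int (n - m)) (bvec (n + m + 2) - fscale 4 (bvec (n + m)))"

definition brUV :: "int \<Rightarrow> int \<Rightarrow> (int \<Rightarrow> 'k::field)" where
  "brUV n m = fscale (of_int (n - m + 1)) (bvec (n + m + 2)) - fscale (4 * of_int (n - m)) (bvec (n + m))"

definition brO :: "(int \<Rightarrow> 'k::field) \<Rightarrow> (int \<Rightarrow> 'k) \<Rightarrow> (int \<Rightarrow> 'k)" where
  "brO f g = (\<Sum>i\<in>suppf f. \<Sum>j\<in>suppf g. fscale (f i * g j) (brUU i j))"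

definition actOP :: "(int \<Rightarrow> 'k::field) \<Rightarrow> (int \<Rightarrow> 'k) \<Rightarrow> (int \<Rightarrow> 'k)" where
  "actOP f g = (\<Sum>i\<in>suppf f. \<Sum>j\<in>suppf g. fscale (f i * g j) (brUV i j))"

text \<open>[(a1,b1),(a2,b2)] = ([a1,a2], [a1,b2] - [a2,b1]) since [V,V] = 0 and [V,U] = -[U,V].\<close>
definition brB :: "(int \<Rightarrow> 'k::field) \<times> (int \<Rightarrow> 'k) \<Rightarrow> (int \<Rightarrow> 'k) \<times> (int \<Rightarrow> 'k) \<Rightarrow> (int \<Rightarrow> 'k) \<times> (int \<Rightarrow> 'k)" where
  "brB p q = (brO (fst p) (fst q), actOP (fst p) (snd q) - actOP (fst q) (snd p))"

definition FO :: "int \<Rightarrow> (int \<Rightarrow> 'k::field) set" where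
  "FO n = module.span fscale {bvec k | k. k \<ge> n}"

definition Fb :: "int \<Rightarrow> ((int \<Rightarrow> 'k::field) \<times> (int \<Rightarrow> 'k)) set" where
  "Fb n = module.span pscale ({(bvec k, 0) | k. k \<ge> n} \<union> {(0, bvec k) | k. k \<ge> n})"

definition derived :: "('k::field \<Rightarrow> 'b \<Rightarrow> 'b::ab_group_add) \<Rightarrow> ('b \<Rightarrow> 'b \<Rightarrow> 'b) \<Rightarrow> 'b set \<Rightarrow> 'b set" where
  "derived s br L = module.span s {br x y | x y. x \<in> L \<and> y \<in> L}"

text \<open>Dimension of the quotient space V / W (W a subspace of V): the cardinality of a finite
  set S of V whose cosets s + W form a basis of V/W, i.e. S is linearly independent modulo W
  and S together with W spans V.\<close>
definition quot_dim :: "('k::field \<Rightarrow> 'b \<Rightarrow> 'b::ab_group_add) \<Rightarrow> 'b set \<Rightarrow> 'b set \<Rightarrow> nat" where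
  "quot_dim s V W = (THE d. \<exists>S. S \<subseteq> V \<and> finite S \<and> card S = d \<and>
      (\<forall>c. (\<Sum>x\<in>S. s (c x) x) \<in> W \<longrightarrow> (\<forall>x\<in>S. c x = 0)) \<and>
      V \<subseteq> module.span s (S \<union> W))"

end

theory Submission
  imports Defs
begin


context vector_space begin

lemma quot_dim_proj:
  assumes D: "subspace D" and GD: "G \<subseteq> D" and HD: "H \<subseteq> D"
    and add: "\<And>x y. x \<in> D \<Longrightarrow> y \<in> D \<Longrightarrow> \<phi> (x + y) = \<phi> x + \<phi> y"
    and scl: "\<And>c x. x \<in> D \<Longrightarrow> \<phi> (c *s x) = c *s \<phi> x"
    and H0: "\<And>h. h \<in> H \<Longrightarrow> \<phi> h = 0"
    and Gres: "\<And>g. g \<in> G \<Longrightarrow> g - \<phi> g \<in> span H"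
    and GB: "\<And>g. g \<in> G \<Longrightarrow> \<phi> g \<in> span B"
    and BV: "B \<subseteq> span G" and Bfin: "finite B" and Bind: "independent B" and Bcard: "card B = d"
    and Bfix: "\<And>b. b \<in> B \<Longrightarrow> \<phi> b = b"
  shows "quot_dim scale (span G) (span H) = d"
proof -
  let ?V = "span G" and ?W = "span H"
  have VD: "?V \<subseteq> D" using span_minimal[OF GD D] .
  have WD: "?W \<subseteq> D" using span_minimal[OF HD D] .
  have phi0: "\<phi> 0 = 0"
  proof -
    have "\<phi> (0 + 0) = \<phi> 0 + \<phi> 0" using add subspace_0[OF D] by blast
    then show ?thesis by simp
  qed
  have phidiff: "\<phi> (x - y) = \<phi> x - \<phi> y" if "x \<in> D" "y \<in> D" for x y
  proof -
    have "\<phi> ((x - y) + y) = \<phi> (x - y) + \<phi> y" using add subspace_diff[OF D] that by blast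
    then show ?thesis by (simp add: algebra_simps)
  qed
  have phisum: "\<phi> (\<Sum>x\<in>A. f x) = (\<Sum>x\<in>A. \<phi> (f x))" if "\<And>x. x \<in> A \<Longrightarrow> f x \<in> D" for A f
    using that
  proof (induction A rule: infinite_finite_induct)
    case (insert x F)
    have "sum f F \<in> D" using insert subspace_sum[OF D, of F f] by auto
    then show ?case using insert add by auto
  qed (auto simp: phi0)
  have W0: "\<phi> w = 0" if "w \<in> ?W" for w
  proof -
    have "w \<in> {x. x \<in> D \<and> \<phi> x = 0}"
      apply (rule span_subspace_induct[OF that])
       apply (rule subspaceI)
      using subspace_0[OF D] phi0 H0 HD add scl subspace_add[OF D] subspace_scale[OF D] by auto
    then show ?thesis by auto
  qed
  have Vres: "v - \<phi> v \<in> ?W" if "v \<in> ?V" for v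
  proof -
    have "v \<in> {x. x \<in> D \<and> x - \<phi> x \<in> ?W}"
      apply (rule span_subspace_induct[OF that])
       apply (rule subspaceI)
      subgoal using subspace_0[OF D] phi0 span_zero by auto
      subgoal for x y using add subspace_add[OF D] span_add[of "x - \<phi> x" H "y - \<phi> y"]
        by (auto simp: algebra_simps)
      subgoal for c x using scl subspace_scale[OF D] span_scale[of "x - \<phi> x" H c]
        by (auto simp: algebra_simps)
      using Gres GD by auto
    then show ?thesis by auto
  qed
  have VB: "\<phi> v \<in> span B" if "v \<in> ?V" for v
  proof -
    have "v \<in> {x. x \<in> D \<and> \<phi> x \<in> span B}"
      apply (rule span_subspace_induct[OF that])
       apply (rule subspaceI)
      subgoal using subspace_0[OF D] phi0 span_zero by auto
      subgoal for x y using add subspace_add[OF D] span_add by auto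
      subgoal for c x using scl subspace_scale[OF D] span_scale by auto
      using GB GD by auto
    then show ?thesis by auto
  qed
  let ?P = "\<lambda>d. \<exists>S. S \<subseteq> ?V \<and> finite S \<and> card S = d \<and>
      (\<forall>c. (\<Sum>x\<in>S. scale (c x) x) \<in> ?W \<longrightarrow> (\<forall>x\<in>S. c x = 0)) \<and>
      ?V \<subseteq> span (S \<union> ?W)"
  have BD: "B \<subseteq> D" using BV VD by auto
  have exB: "?P d"
  proof (intro exI[of _ B] conjI allI impI ballI)
    show "B \<subseteq> ?V" by fact
    show "finite B" by fact
    show "card B = d" by fact
    fix c x assume s: "(\<Sum>x\<in>B. c x *s x) \<in> ?W" and x: "x \<in> B"
    have "\<phi> (\<Sum>x\<in>B. c x *s x) = (\<Sum>x\<in>B. c x *s x)"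
    proof -
      have "\<phi> (\<Sum>x\<in>B. c x *s x) = (\<Sum>x\<in>B. \<phi> (c x *s x))"
        using BD subspace_scale[OF D] by (intro phisum) auto
      also have "\<dots> = (\<Sum>x\<in>B. c x *s x)" using BD scl Bfix by (intro sum.cong) auto
      finally show ?thesis .
    qed
    then have "(\<Sum>x\<in>B. c x *s x) = 0" using W0[OF s] by simp
    then show "c x = 0" using Bind Bfin x independentD[of B B c x] by auto
  next
    show "?V \<subseteq> span (B \<union> ?W)"
    proof
      fix v assume v: "v \<in> ?V"
      have "\<phi> v \<in> span (B \<union> ?W)" using VB[OF v] span_mono[of B "B \<union> ?W"] by auto
      moreover have "v - \<phi> v \<in> span (B \<union> ?W)" using Vres[OF v] span_superset[of "B \<union> ?W"] by auto
      ultimately have "\<phi> v + (v - \<phi> v) \<in> span (B \<union> ?W)" by (rule span_add)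
      then show "v \<in> span (B \<union> ?W)" by simp
    qed
  qed
  have uniq: "d' = d" if "?P d'" for d'
  proof -
    from that obtain S where SV: "S \<subseteq> ?V" and Sfin: "finite S" and Scard: "card S = d'"
      and Sind: "\<And>c. (\<Sum>x\<in>S. c x *s x) \<in> ?W \<Longrightarrow> (\<forall>x\<in>S. c x = 0)"
      and Sspan: "?V \<subseteq> span (S \<union> ?W)" by blast
    have SD: "S \<subseteq> D" using SV VD by auto
    have inj: "inj_on \<phi> S"
    proof (rule inj_onI, rule ccontr)
      fix x y assume x: "x \<in> S" and y: "y \<in> S" and e: "\<phi> x = \<phi> y" and ne: "x \<noteq> y"
      define c where "c z = (if z = x then 1 else if z = y then -1 else (0::'a))" for z
      have "(\<Sum>z\<in>S. c z *s z) = (\<Sum>z\<in>{x,y}. c z *s z)"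
        using Sfin x y by (intro sum.mono_neutral_right) (auto simp: c_def)
      also have "\<dots> = x - y" using ne by (simp add: c_def)
      also have "\<dots> = (x - \<phi> x) - (y - \<phi> y)" using e by simp
      also have "\<dots> \<in> ?W" using Vres x y SV by (meson span_diff subsetD)
      finally have "\<forall>z\<in>S. c z = 0" using Sind by blast
      then have "c x = 0" using x by blast
      then show False by (simp add: c_def)
    qed
    have indS: "independent (\<phi> ` S)"
    proof
      assume "dependent (\<phi> ` S)"
      then obtain u where u1: "\<exists>v\<in>\<phi> ` S. u v \<noteq> 0" and u2: "(\<Sum>v\<in>\<phi> ` S. u v *s v) = 0"
        using dependent_finite[of "\<phi> ` S"] Sfin by auto
      define s where "s = (\<Sum>x\<in>S. u (\<phi> x) *s x)"
      have sV: "s \<in> ?V" unfolding s_def using SV by (intro span_sum span_scale) auto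
      have "\<phi> s = (\<Sum>x\<in>S. u (\<phi> x) *s \<phi> x)"
      proof -
        have "\<phi> s = (\<Sum>x\<in>S. \<phi> (u (\<phi> x) *s x))"
          unfolding s_def using SD subspace_scale[OF D] by (intro phisum) auto
        also have "\<dots> = (\<Sum>x\<in>S. u (\<phi> x) *s \<phi> x)" using SD scl by (intro sum.cong) auto
        finally show ?thesis .
      qed
      also have "\<dots> = (\<Sum>v\<in>\<phi> ` S. u v *s v)" using sum.reindex[OF inj, of "\<lambda>v. u v *s v"] by simp
      finally have "\<phi> s = 0" using u2 by simp
      then have "s \<in> ?W" using Vres[OF sV] by simp
      then have "\<forall>x\<in>S. u (\<phi> x) = 0" using Sind[of "\<lambda>x. u (\<phi> x)"] unfolding s_def by simp
      then show False using u1 by auto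
    qed
    have c1: "card (\<phi> ` S) \<le> card B"
    proof -
      have "\<phi> ` S \<subseteq> span B" using VB SV by auto
      then show ?thesis using independent_span_bound[OF Bfin indS] by auto
    qed
    have c2: "card B \<le> card (\<phi> ` S)"
    proof -
      have "B \<subseteq> span (\<phi> ` S)"
      proof
        fix b assume b: "b \<in> B"
        have bsp: "b \<in> span (S \<union> ?W)" using BV Sspan b by auto
        have "b \<in> {x. x \<in> D \<and> \<phi> x \<in> span (\<phi> ` S)}"
          apply (rule span_subspace_induct[OF bsp])
           apply (rule subspaceI)
          subgoal using subspace_0[OF D] phi0 span_zero by auto
          subgoal for x y using add subspace_add[OF D] span_add by auto
          subgoal for c x using scl subspace_scale[OF D] span_scale by auto
          using SD WD W0 span_zero span_base by auto
        then show "b \<in> span (\<phi> ` S)" using Bfix b by auto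
      qed
      then show ?thesis using independent_span_bound[OF _ Bind] Sfin by auto
    qed
    show ?thesis using c1 c2 Scard Bcard card_image[OF inj] by simp
  qed
  show ?thesis unfolding quot_dim_def
  proof (rule the_equality)
    show "?P d" by (rule exB)
    fix d' assume "?P d'" then show "d' = d" by (rule uniq)
  qed
qed

end



interpretation fs: vector_space "fscale :: 'k::field \<Rightarrow> _"
  by unfold_locales (auto simp: fscale_def fun_eq_iff algebra_simps)

interpretation ps: vector_space "pscale :: 'k::field \<Rightarrow> _"
  by unfold_locales (auto simp: pscale_def fscale_def fun_eq_iff algebra_simps)

lemma sum_apply_fun: "(\<Sum>x\<in>A. g x) (j::'a) = (\<Sum>x\<in>A. (g x j :: 'b::comm_monoid_add))"
  by (induction A rule: infinite_finite_induct) auto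

lemma suppf_bvec[simp]: "suppf (bvec a :: int \<Rightarrow> 'k::field) = {a}"
  by (auto simp: suppf_def bvec_def)

lemma suppf_zero[simp]: "suppf (0 :: int \<Rightarrow> 'k::field) = {}"
  by (auto simp: suppf_def)

lemma suppf_add: "suppf (f + g :: int \<Rightarrow> 'k::field) \<subseteq> suppf f \<union> suppf g"
  by (auto simp: suppf_def)

lemma suppf_diff: "suppf (f - g :: int \<Rightarrow> 'k::field) \<subseteq> suppf f \<union> suppf g"
  by (auto simp: suppf_def)

lemma suppf_fscale: "suppf (fscale c f :: int \<Rightarrow> 'k::field) \<subseteq> suppf f"
  by (auto simp: suppf_def fscale_def)

lemma suppf_sum: "suppf (\<Sum>x\<in>A. g x :: int \<Rightarrow> 'k::field) \<subseteq> (\<Union>x\<in>A. suppf (g x))"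
  by (auto simp: suppf_def sum_apply_fun intro: ccontr dest: sum.neutral)

lemma fin_sum: "(\<And>x. x \<in> A \<Longrightarrow> finite (suppf (g x :: int \<Rightarrow> 'k::field))) \<Longrightarrow> finite A \<Longrightarrow> finite (suppf (\<Sum>x\<in>A. g x))"
  by (rule finite_subset[OF suppf_sum]) auto

lemma fin_sum': "(\<And>x. x \<in> A \<Longrightarrow> finite (suppf (g x :: int \<Rightarrow> 'k::field))) \<Longrightarrow> finite (suppf (\<Sum>x\<in>A. g x))"
  by (cases "finite A") (auto intro: fin_sum)

definition Lf :: "(int \<Rightarrow> 'k::field) \<Rightarrow> (int \<Rightarrow> 'k) \<Rightarrow> 'k" where
  "Lf w f = (\<Sum>k\<in>suppf f. w k * f k)"

lemma Lsup: "finite A \<Longrightarrow> suppf f \<subseteq> A \<Longrightarrow> Lf w f = (\<Sum>k\<in>A. w k * f k)"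
  unfolding Lf_def by (rule sum.mono_neutral_left) (auto simp: suppf_def)

lemma Ladd: "finite (suppf f) \<Longrightarrow> finite (suppf g) \<Longrightarrow> Lf w (f + g) = Lf w f + Lf w g"
  using suppf_add[of f g]
  by (simp add: Lsup[of "suppf f \<union> suppf g"] sum.distrib distrib_left)

lemma Ldiff: "finite (suppf f) \<Longrightarrow> finite (suppf g) \<Longrightarrow> Lf w (f - g) = Lf w f - Lf w g"
  using suppf_diff[of f g]
  by (simp add: Lsup[of "suppf f \<union> suppf g"] sum_subtractf right_diff_distrib)

lemma Lscale: "finite (suppf f) \<Longrightarrow> Lf w (fscale c f) = c * Lf w f"
  using suppf_fscale[of c f]
  by (simp add: Lsup[of "suppf f"] sum_distrib_left fscale_def algebra_simps)

lemma Lzero[simp]: "Lf w 0 = 0"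
  by (simp add: Lf_def)

lemma Lbvec[simp]: "Lf w (bvec a) = w a"
  unfolding Lf_def suppf_bvec by (simp add: bvec_def)

lemma Lsum: "(\<And>x. x \<in> A \<Longrightarrow> finite (suppf (g x))) \<Longrightarrow> Lf w (\<Sum>x\<in>A. g x) = (\<Sum>x\<in>A. Lf w (g x))"
proof (induction A rule: infinite_finite_induct)
  case (insert x F)
  have "Lf w (\<Sum>x\<in>insert x F. g x) = Lf w (g x + (\<Sum>x\<in>F. g x))"
    using insert by (simp only: sum.insert[OF insert(1,2)])
  also have "\<dots> = Lf w (g x) + Lf w (\<Sum>x\<in>F. g x)"
    using insert by (intro Ladd fin_sum) auto
  also have "\<dots> = Lf w (g x) + (\<Sum>x\<in>F. Lf w (g x))" using insert by simp
  also have "\<dots> = (\<Sum>x\<in>insert x F. Lf w (g x))" by (rule sum.insert[OF insert(1,2), symmetric])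
  finally show ?case .
qed auto

lemma suppf_brUU: "suppf (brUU a b :: int \<Rightarrow> 'k::field) \<subseteq> {a+b, a+b+2}"
  by (auto simp: suppf_def brUU_def fscale_def bvec_def)

lemma suppf_brUV: "suppf (brUV a b :: int \<Rightarrow> 'k::field) \<subseteq> {a+b, a+b+2}"
  by (auto simp: suppf_def brUV_def fscale_def bvec_def)

lemma L_brUU: "Lf w (brUU a b) = of_int (a - b) * (w (a+b+2) - 4 * w (a+b))"
  by (subst Lsup[OF _ suppf_brUU]) (auto simp: brUU_def fscale_def bvec_def algebra_simps)

lemma fin_brO: "finite (suppf (brO f g))"
  unfolding brO_def
  by (intro fin_sum' finite_subset[OF suppf_fscale] finite_subset[OF suppf_brUU]) auto

lemma fin_actOP: "finite (suppf (actOP f g))"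
  unfolding actOP_def
  by (intro fin_sum' finite_subset[OF suppf_fscale] finite_subset[OF suppf_brUV]) auto

lemma L_brO:
  assumes "\<And>a b. a \<in> suppf f \<Longrightarrow> b \<in> suppf g \<Longrightarrow> Lf w (brUU a b) = 0"
  shows "Lf w (brO f g) = 0"
  unfolding brO_def
  apply (subst Lsum)
   apply (intro fin_sum' finite_subset[OF suppf_fscale] finite_subset[OF suppf_brUU]; simp)
  apply (rule sum.neutral, rule ballI)
  apply (subst Lsum)
   apply (intro finite_subset[OF suppf_fscale] finite_subset[OF suppf_brUU]; simp)
  apply (rule sum.neutral, rule ballI)
  apply (subst Lscale)
   apply (intro finite_subset[OF suppf_brUU]; simp)
  using assms by simp




definition wO :: "int \<Rightarrow> int \<Rightarrow> int \<Rightarrow> 'k::field" where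
  "wO n j k = (if j \<le> 2*n then (if k = j then 1 else 0)
     else if j \<le> k \<and> even (k - j) then 4 ^ nat ((k - j) div 2) else 0)"

definition phiO :: "int \<Rightarrow> (int \<Rightarrow> 'k::field) \<Rightarrow> (int \<Rightarrow> 'k)" where
  "phiO n f = (\<lambda>j. if n \<le> j \<and> j \<le> 2*n+2 then Lf (wO n j) f else 0)"

lemma wO_step:
  assumes "2*n+1 \<le> k" "2*n < j" "j \<le> 2*n+2"
  shows "(wO n j (k+2) :: 'k::field) = 4 * wO n j k"
proof (cases "j \<le> k")
  case True
  have "nat ((k + 2 - j) div 2) = Suc (nat ((k - j) div 2))" using True by simp
  then show ?thesis using True assms by (simp add: wO_def)
next
  case False
  then have "k + 2 - j = 1" using assms by simp
  then have h1: "\<not> (j \<le> k + 2 \<and> even (k + 2 - j))" by (metis odd_one)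
  have h2: "\<not> (j \<le> k \<and> even (k - j))" using False by simp
  show ?thesis using h1 h2 assms(2) unfolding wO_def by (simp only: if_False if_True not_le[symmetric] mult_zero_right)
qed

lemma wO_low: "j \<le> 2*n \<Longrightarrow> 2*n < k \<Longrightarrow> wO n j k = 0"
  by (simp add: wO_def)

lemma wO_kill:
  assumes "n \<le> a" "n \<le> b" and that: "j \<le> 2*n+2"
  shows "(of_int (a - b) :: 'k::field) * (wO n j (a+b+2) - 4 * wO n j (a+b)) = 0"
proof (cases "a = b")
  case False
  then have ab: "2*n+1 \<le> a+b" using assms by simp
  show ?thesis
  proof (cases "j \<le> 2*n")
    case True then show ?thesis using ab by (simp add: wO_low)
  next
    case False then show ?thesis using ab wO_step[OF ab, of j, where 'k='k] that by simp
  qed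
qed simp

lemma phiO_brUU_Lf:
  assumes "n \<le> a" "n \<le> b" "j \<le> 2*n+2"
  shows "Lf (wO n j) (brUU a b :: int \<Rightarrow> 'k::field) = 0"
  using wO_kill[of n a b j] assms by (simp add: L_brUU)

lemma phiO_brO:
  assumes "suppf x \<subseteq> {n..}" "suppf y \<subseteq> {n..}"
  shows "phiO n (brO x y :: int \<Rightarrow> 'k::field) = 0"
  unfolding phiO_def
  using assms by (auto simp: fun_eq_iff intro!: L_brO phiO_brUU_Lf)

lemma FO_supp:
  assumes "x \<in> FO n"
  shows "finite (suppf x) \<and> suppf x \<subseteq> {n..}"
proof -
  have "FO n \<subseteq> {x :: int \<Rightarrow> 'a. finite (suppf x) \<and> suppf x \<subseteq> {n..}}"
    unfolding FO_def
  proof (rule fs.span_minimal)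
    show "{bvec k |k. n \<le> k} \<subseteq> {x :: int \<Rightarrow> 'a. finite (suppf x) \<and> suppf x \<subseteq> {n..}}" by auto
    show "fs.subspace {x :: int \<Rightarrow> 'a. finite (suppf x) \<and> suppf x \<subseteq> {n..}}"
    proof (rule fs.subspaceI)
      fix x y :: "int \<Rightarrow> 'a" assume "x \<in> {x. finite (suppf x) \<and> suppf x \<subseteq> {n..}}" "y \<in> {x. finite (suppf x) \<and> suppf x \<subseteq> {n..}}"
      then show "x + y \<in> {x. finite (suppf x) \<and> suppf x \<subseteq> {n..}}"
        using suppf_add[of x y] by (auto intro: finite_subset)
    next
      fix c and x :: "int \<Rightarrow> 'a" assume "x \<in> {x. finite (suppf x) \<and> suppf x \<subseteq> {n..}}"
      then show "fscale c x \<in> {x. finite (suppf x) \<and> suppf x \<subseteq> {n..}}"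
        using suppf_fscale[of c x] by (auto intro: finite_subset)
    qed simp
  qed
  then show ?thesis using assms by auto
qed

lemma phiO_add: "finite (suppf f) \<Longrightarrow> finite (suppf g) \<Longrightarrow> phiO n (f + g) = phiO n f + phiO n g"
  by (auto simp: phiO_def fun_eq_iff Ladd)

lemma phiO_scale: "finite (suppf f) \<Longrightarrow> phiO n (fscale c f) = fscale c (phiO n f)"
  by (auto simp: phiO_def fun_eq_iff Lscale[unfolded fscale_def] fscale_def)

lemma phiO_bvec_low:
  assumes "n \<le> k" "k \<le> 2*n+2"
  shows "phiO n (bvec k) = (bvec k :: int \<Rightarrow> 'k::field)"
proof -
  have "wO n j k = (if k = j then 1 else (0::'k))" if "n \<le> j" "j \<le> 2*n+2" for j
  proof (cases "j \<le> 2*n")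
    case False
    then have "j \<le> k \<and> even (k - j) \<longleftrightarrow> k = j" using assms that by presburger
    then show ?thesis using False by (auto simp: wO_def)
  qed (simp add: wO_def)
  moreover have "phiO n (bvec k) j = (if n \<le> j \<and> j \<le> 2*n+2 then wO n j k else (0::'k))" for j
    by (simp add: phiO_def)
  ultimately show ?thesis using assms by (auto simp: fun_eq_iff bvec_def)
qed

lemma phiO_bvec_high:
  assumes "2*n+3 \<le> k"
  shows "phiO n (bvec k) = fscale 4 (phiO n (bvec (k-2)) :: int \<Rightarrow> 'k::field)"
proof -
  have "wO n j k = 4 * (wO n j (k-2) :: 'k)" if "n \<le> j" "j \<le> 2*n+2" for j
  proof (cases "j \<le> 2*n")
    case True then show ?thesis using assms by (simp add: wO_low)
  next
    case False then show ?thesis using assms that wO_step[of n "k-2" j, where 'k='k] by simp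
  qed
  then show ?thesis by (auto simp: phiO_def fun_eq_iff fscale_def)
qed

lemma resO:
  assumes M: "fs.subspace M"
    and rel: "\<And>k. 2*n+3 \<le> k \<Longrightarrow> bvec k - fscale 4 (bvec (k-2)) \<in> M"
    and k: "n \<le> k" and n1: "-1 \<le> n"
  shows "bvec k - phiO n (bvec k :: int \<Rightarrow> 'k::field) \<in> M"
  using k
proof (induction "nat (k - n)" arbitrary: k rule: less_induct)
  case less
  show ?case
  proof (cases "k \<le> 2*n+2")
    case True
    have "phiO n (bvec k) = (bvec k :: int \<Rightarrow> 'k)" using True less.prems by (rule phiO_bvec_low[rotated])
    then show ?thesis using fs.subspace_0[OF M] by simp
  next
    case False
    have IH: "bvec (k-2) - phiO n (bvec (k-2) :: int \<Rightarrow> 'k) \<in> M"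
      using less False n1 by (intro less) auto
    have "bvec k - phiO n (bvec k) = (bvec k - fscale 4 (bvec (k-2))) + fscale 4 (bvec (k-2) - phiO n (bvec (k-2)) :: int \<Rightarrow> 'k)"
      using phiO_bvec_high[of n k, where 'k='k] False by (simp add: fscale_def fun_eq_iff algebra_simps)
    also have "\<dots> \<in> M" using False rel IH M by (intro fs.subspace_add fs.subspace_scale) auto
    finally show ?thesis .
  qed
qed

lemma in_span_bvec:
  assumes "finite I" "suppf f \<subseteq> I"
  shows "f \<in> fs.span (bvec ` I :: (int \<Rightarrow> 'k::field) set)"
proof -
  have "f = (\<Sum>i\<in>I. fscale (f i) (bvec i))"
  proof
    fix j
    have "(\<Sum>i\<in>I. fscale (f i) (bvec i)) j = (\<Sum>i\<in>I. if j = i then f i else 0)"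
      by (simp add: sum_apply_fun fscale_def bvec_def if_distrib cong: if_cong)
    also have "\<dots> = f j" using assms by (auto simp: suppf_def)
    finally show "f j = (\<Sum>i\<in>I. fscale (f i) (bvec i)) j" by simp
  qed
  also have "\<dots> \<in> fs.span (bvec ` I)"
    by (intro fs.span_sum fs.span_scale fs.span_base) auto
  finally show ?thesis .
qed

lemma bvec_inj: "inj (bvec :: int \<Rightarrow> int \<Rightarrow> 'k::field)"
  by (rule injI) (auto simp: bvec_def fun_eq_iff split: if_splits)

lemma indep_bvec: "\<not> fs.dependent (bvec ` I :: (int \<Rightarrow> 'k::field) set)"
  unfolding fs.dependent_explicit
proof clarify
  fix t u v assume t: "finite t" "t \<subseteq> bvec ` I" and s: "(\<Sum>v\<in>t. fscale (u v) v) = 0"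
    and v: "v \<in> t" and uv: "u v \<noteq> 0"
  obtain i where vi: "v = bvec i" using v t by auto
  have "0 = (\<Sum>v\<in>t. fscale (u v) v) i" using s by simp
  also have "\<dots> = (\<Sum>x\<in>t. if x = v then u v else 0)"
    unfolding sum_apply_fun
  proof (rule sum.cong)
    fix x assume "x \<in> t"
    then obtain i' where "x = bvec i'" using t by auto
    moreover have "x = v \<longleftrightarrow> i' = i"
    proof
      assume "x = v"
      then show "i' = i" using vi \<open>x = bvec i'\<close> bvec_inj by (metis injD)
    qed (use vi \<open>x = bvec i'\<close> in simp)
    ultimately have "x i = (if x = v then 1 else 0)" by (auto simp: bvec_def)
    then show "fscale (u x) x i = (if x = v then u v else 0)"
      by (auto simp: fscale_def)
  qed simp
  also have "\<dots> = u v" using t v by simp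
  finally show False using uv by simp
qed




lemma brO_bvec: "brO (bvec a) (bvec b) = (brUU a b :: int \<Rightarrow> 'k::field)"
  unfolding brO_def suppf_bvec by (simp add: bvec_def fscale_def)

lemma suppf_phiO: "suppf (phiO n f) \<subseteq> {n..2*n+2}"
  by (auto simp: suppf_def phiO_def split: if_splits)

lemma subspace_fin: "fs.subspace {f :: int \<Rightarrow> 'k::field. finite (suppf f)}"
proof (rule fs.subspaceI)
  fix x y :: "int \<Rightarrow> 'k" assume "x \<in> {f. finite (suppf f)}" "y \<in> {f. finite (suppf f)}"
  then show "x + y \<in> {f. finite (suppf f)}" using suppf_add[of x y] by (auto intro: finite_subset)
next
  fix c and x :: "int \<Rightarrow> 'k" assume "x \<in> {f. finite (suppf f)}"
  then show "fscale c x \<in> {f. finite (suppf f)}" using suppf_fscale[of c x] by (auto intro: finite_subset)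
qed simp

lemma relO:
  assumes "2*n+3 \<le> k"
  shows "bvec k - fscale 4 (bvec (k-2)) = fscale (1 / of_int (k-2-2*n)) (brO (bvec (k-2-n)) (bvec n) :: int \<Rightarrow> 'k::field_char_0)"
proof -
  define c where "c = (of_int (k-2-2*n) :: 'k)"
  have "k-2-2*n \<noteq> 0" using assms by simp
  then have ne: "c \<noteq> 0" unfolding c_def by (metis of_int_eq_0_iff)
  have "brO (bvec (k-2-n)) (bvec n) = fscale c (bvec k - fscale 4 (bvec (k-2)) :: int \<Rightarrow> 'k)"
    unfolding brO_bvec brUU_def c_def by (simp add: algebra_simps)
  then show ?thesis using ne unfolding c_def[symmetric] by (simp add: fscale_def fun_eq_iff)
qed

lemma card_B: "-1 \<le> n \<Longrightarrow> card (bvec ` {n..2*n+2} :: (int \<Rightarrow> 'k::field) set) = nat (n+3)"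
  using card_image[OF inj_on_subset[OF bvec_inj[where 'k='k] subset_UNIV], of "{n..2*n+2}"] by (simp add: add.commute)

lemma dimO:
  assumes n1: "-1 \<le> n"
  shows "quot_dim (fscale :: 'k::field_char_0 \<Rightarrow> _) (FO n) (derived fscale brO (FO n)) = nat (n + 3)"
  unfolding FO_def derived_def
proof (rule fs.quot_dim_proj[where D = "{f. finite (suppf f)}" and \<phi> = "phiO n" and B = "bvec ` {n..2*n+2}"])
  show "fs.subspace {f :: int \<Rightarrow> 'k. finite (suppf f)}" by (rule subspace_fin)
  show "{bvec k |k. n \<le> k} \<subseteq> {f :: int \<Rightarrow> 'k. finite (suppf f)}" by auto
  show "{brO x y |x y. x \<in> fs.span {bvec k |k. n \<le> k} \<and> y \<in> fs.span {bvec k |k. n \<le> k}} \<subseteq> {f :: int \<Rightarrow> 'k. finite (suppf f)}"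
    using fin_brO by auto
  show "phiO n (x + y) = phiO n x + phiO n y" if "x \<in> {f :: int \<Rightarrow> 'k. finite (suppf f)}" "y \<in> {f. finite (suppf f)}" for x y
    using that phiO_add by auto
  show "phiO n (fscale c x) = fscale c (phiO n x)" if "x \<in> {f :: int \<Rightarrow> 'k. finite (suppf f)}" for c x
    using that phiO_scale by auto
  show "phiO n h = 0" if "h \<in> {brO x y |x y. x \<in> fs.span {bvec k |k. n \<le> k} \<and> y \<in> fs.span {bvec k |k. n \<le> k}}" for h :: "int \<Rightarrow> 'k"
    using that FO_supp[unfolded FO_def] phiO_brO by blast
  show "g - phiO n g \<in> fs.span {brO x y |x y. x \<in> fs.span {bvec k |k. n \<le> k} \<and> y \<in> fs.span {bvec k |k. n \<le> k}}"
    if gG: "g \<in> {bvec k |k. n \<le> k}" for g :: "int \<Rightarrow> 'k"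
  proof -
    obtain k where g: "g = bvec k" and k: "n \<le> k" using gG by auto
    show ?thesis unfolding g
    proof (rule resO[OF fs.subspace_span _ k n1])
      fix k' :: int assume k': "2*n+3 \<le> k'"
      have "brO (bvec (k'-2-n)) (bvec n) \<in> {brO x y |x y. x \<in> fs.span {bvec k |k. n \<le> k} \<and> y \<in> fs.span {bvec k |k. n \<le> k}}"
        using k' n1 by (intro CollectI exI[of _ "bvec (k'-2-n)"] exI[of _ "bvec n"]) (auto intro!: fs.span_base)
      then show "bvec k' - fscale 4 (bvec (k'-2)) \<in> ( fs.span {brO x y |x y. x \<in> fs.span {bvec k |k. n \<le> k} \<and> y \<in> fs.span {bvec k |k. n \<le> k}} :: (int \<Rightarrow> 'k) set)"
        unfolding relO[OF k', where 'k='k] by (intro fs.span_scale fs.span_base)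
    qed
  qed
  show "phiO n g \<in> fs.span (bvec ` {n..2*n+2})" if "g \<in> {bvec k |k. n \<le> k}" for g :: "int \<Rightarrow> 'k"
    by (rule in_span_bvec[OF _ suppf_phiO]) simp
  show "bvec ` {n..2*n+2} \<subseteq> fs.span {bvec k |k. n \<le> k}"
    by (auto intro!: fs.span_base)
  show "finite (bvec ` {n..2*n+2} :: (int \<Rightarrow> 'k) set)" by simp
  show "\<not> fs.dependent (bvec ` {n..2*n+2} :: (int \<Rightarrow> 'k) set)" by (rule indep_bvec)
  show "card (bvec ` {n..2*n+2} :: (int \<Rightarrow> 'k) set) = nat (n+3)" using card_B[OF n1] .
  show "phiO n b = b" if "b \<in> (bvec ` {n..2*n+2} :: (int \<Rightarrow> 'k) set)" for b
    using that phiO_bvec_low by auto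
qed




definition psi :: "int \<Rightarrow> (int \<Rightarrow> 'k::field) \<Rightarrow> (int \<Rightarrow> 'k)" where
  "psi n g = (\<lambda>j. if n \<le> j \<and> j \<le> 2*n then g j else 0)"

definition phiB :: "int \<Rightarrow> (int \<Rightarrow> 'k::field) \<times> (int \<Rightarrow> 'k) \<Rightarrow> (int \<Rightarrow> 'k) \<times> (int \<Rightarrow> 'k)" where
  "phiB n p = (phiO n (fst p), psi n (snd p))"

lemma psi_add: "psi n (f + g) = psi n f + psi n g"
  by (auto simp: psi_def fun_eq_iff)
lemma psi_diff: "psi n (f - g) = psi n f - psi n g"
  by (auto simp: psi_def fun_eq_iff)
lemma psi_scale: "psi n (fscale c f) = fscale c (psi n f)"
  by (auto simp: psi_def fun_eq_iff fscale_def)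
lemma psi_zero[simp]: "psi n 0 = 0"
  by (auto simp: psi_def fun_eq_iff)
lemma phiO_zero[simp]: "phiO n 0 = 0"
  by (auto simp: phiO_def fun_eq_iff)
lemma fscale_zero[simp]: "fscale c 0 = 0"
  by (auto simp: fscale_def fun_eq_iff)
lemma pscale_pair[simp]: "pscale c (f, g) = (fscale c f, fscale c g)"
  by (simp add: pscale_def)

lemma bvec_nz: "bvec a \<noteq> (0 :: int \<Rightarrow> 'k::field)"
  by (auto simp: bvec_def fun_eq_iff)

lemma bvec_eq: "(bvec a = (bvec b :: int \<Rightarrow> 'k::field)) \<longleftrightarrow> a = b"
  using bvec_inj[where 'k='k] by (auto dest: injD)

lemma brO_zero2[simp]: "brO f 0 = 0" by (simp add: brO_def)
lemma actOP_zero1[simp]: "actOP 0 g = 0" by (simp add: actOP_def)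
lemma actOP_zero2[simp]: "actOP f 0 = 0" by (simp add: actOP_def)

lemma actOP_bvec: "actOP (bvec a) (bvec b) = (brUV a b :: int \<Rightarrow> 'k::field)"
  unfolding actOP_def suppf_bvec by (simp add: bvec_def fscale_def)

lemma psi_actOP:
  assumes "suppf f \<subseteq> {n..}" "suppf g \<subseteq> {n..}"
  shows "psi n (actOP f g :: int \<Rightarrow> 'k::field) = 0"
proof -
  have "actOP f g j = 0" if "j \<le> 2*n" for j
    unfolding actOP_def sum_apply_fun
  proof (intro sum.neutral ballI)
    fix a b assume a: "a \<in> suppf f" and b: "b \<in> suppf g"
    have "a \<ge> n" "b \<ge> n" using a b assms by auto
    then have ab: "a + b = j \<Longrightarrow> a = b" "a + b + 2 \<noteq> j" using that by auto
    then have "brUV a b j = (0::'k)"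
      by (cases "a + b = j") (auto simp: brUV_def fscale_def bvec_def)
    then show "fscale (f a * g b) (brUV a b) j = 0" by (simp add: fscale_def)
  qed
  then show ?thesis by (auto simp: psi_def fun_eq_iff)
qed

lemma Fb_supp:
  assumes "x \<in> Fb n"
  shows "finite (suppf (fst x)) \<and> suppf (fst x) \<subseteq> {n..} \<and> finite (suppf (snd x)) \<and> suppf (snd x) \<subseteq> {n..}"
proof -
  let ?E = "{x :: (int \<Rightarrow> 'a) \<times> (int \<Rightarrow> 'a). finite (suppf (fst x)) \<and> suppf (fst x) \<subseteq> {n..} \<and> finite (suppf (snd x)) \<and> suppf (snd x) \<subseteq> {n..}}"
  have "Fb n \<subseteq> ?E"
    unfolding Fb_def
  proof (rule ps.span_minimal)
    show "{(bvec k, 0) |k. n \<le> k} \<union> {(0, bvec k) |k. n \<le> k} \<subseteq> ?E" by auto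
    show "ps.subspace ?E"
    proof (rule ps.subspaceI)
      fix x y :: "(int \<Rightarrow> 'a) \<times> (int \<Rightarrow> 'a)" assume "x \<in> ?E" "y \<in> ?E"
      then show "x + y \<in> ?E"
        using suppf_add[of "fst x" "fst y"] suppf_add[of "snd x" "snd y"] by (auto intro: finite_subset)
    next
      fix c and x :: "(int \<Rightarrow> 'a) \<times> (int \<Rightarrow> 'a)" assume "x \<in> ?E"
      then show "pscale c x \<in> ?E"
        using suppf_fscale[of c "fst x"] suppf_fscale[of c "snd x"] by (auto simp: pscale_def intro: finite_subset)
    qed (simp add: zero_prod_def)
  qed
  then show ?thesis using assms by auto
qed

lemma expand_bvec:
  assumes "finite I" "suppf f \<subseteq> I"
  shows "f = (\<Sum>i\<in>I. fscale (f i) (bvec i :: int \<Rightarrow> 'k::field))"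
proof
  fix j
  have "(\<Sum>i\<in>I. fscale (f i) (bvec i)) j = (\<Sum>i\<in>I. if j = i then f i else 0)"
    by (simp add: sum_apply_fun fscale_def bvec_def if_distrib cong: if_cong)
  also have "\<dots> = f j" using assms by (auto simp: suppf_def)
  finally show "f j = (\<Sum>i\<in>I. fscale (f i) (bvec i)) j" by simp
qed

lemma in_span_pair:
  assumes "finite I1" "suppf f \<subseteq> I1" "finite I2" "suppf g \<subseteq> I2"
  shows "(f, g) \<in> ps.span ((\<lambda>i. (bvec i, 0)) ` I1 \<union> (\<lambda>i. (0, bvec i)) ` I2 :: ((int \<Rightarrow> 'k::field) \<times> (int \<Rightarrow> 'k)) set)"
proof -
  let ?B = "(\<lambda>i. (bvec i, 0)) ` I1 \<union> (\<lambda>i. (0, bvec i)) ` I2 :: ((int \<Rightarrow> 'k) \<times> (int \<Rightarrow> 'k)) set"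
  have "(f, g) = (\<Sum>i\<in>I1. pscale (f i) (bvec i, 0)) + (\<Sum>i\<in>I2. pscale (g i) (0, bvec i))"
    using expand_bvec[OF assms(1,2)] expand_bvec[OF assms(3,4)]
    by (simp add: prod_eq_iff fst_sum snd_sum)
  also have "\<dots> \<in> ps.span ?B"
    by (intro ps.span_add ps.span_sum ps.span_scale ps.span_base) auto
  finally show ?thesis .
qed




lemma relV3:
  assumes "2*n+3 \<le> k"
  shows "bvec k = fscale (1 / of_int (k-1-2*n)) (brUV (k-2-n) n + fscale (4 * of_int (k-2-2*n)) (bvec (k-2)) :: int \<Rightarrow> 'k::field_char_0)"
proof -
  define c where "c = (of_int (k-1-2*n) :: 'k)"
  have "k-1-2*n \<noteq> 0" using assms by simp
  then have ne: "c \<noteq> 0" unfolding c_def by (metis of_int_eq_0_iff)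
  have "brUV (k-2-n) n + fscale (4 * of_int (k-2-2*n)) (bvec (k-2)) = fscale c (bvec k :: int \<Rightarrow> 'k)"
    unfolding brUV_def c_def by (auto simp: fscale_def fun_eq_iff algebra_simps)
  then show ?thesis using ne unfolding c_def[symmetric] by (simp add: fscale_def fun_eq_iff)
qed

lemma relV1: "bvec (2*n+1) = fscale (1/4) (brUV n (n+1) :: int \<Rightarrow> 'k::field_char_0)"
  by (auto simp: brUV_def fscale_def bvec_def fun_eq_iff)

lemma relV2: "bvec (2*n+2) = (brUV n n :: int \<Rightarrow> 'k::field_char_0)"
  by (auto simp: brUV_def fscale_def bvec_def fun_eq_iff)

lemma resV:
  assumes M: "ps.subspace M"
    and gen: "\<And>a b. n \<le> a \<Longrightarrow> n \<le> b \<Longrightarrow> (0, brUV a b) \<in> M"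
    and k: "2*n+1 \<le> k" and n1: "-1 \<le> n"
  shows "(0, bvec k :: int \<Rightarrow> 'k::field_char_0) \<in> M"
  using k
proof (induction "nat (k - n)" arbitrary: k rule: less_induct)
  case less
  consider "k = 2*n+1" | "k = 2*n+2" | "2*n+3 \<le> k" using less.prems by linarith
  then show ?case
  proof cases
    case 1
    have "(0, bvec k :: int \<Rightarrow> 'k) = pscale (1/4) (0, brUV n (n+1))"
      using relV1[of n, where 'k='k] 1 by simp
    then show ?thesis using ps.subspace_scale[OF M gen[of n "n+1"], of "1/4"] by simp
  next
    case 2
    have "(0, bvec k :: int \<Rightarrow> 'k) = (0, brUV n n)"
      using relV2[of n, where 'k='k] 2 by simp
    then show ?thesis using gen[of n n] by simp
  next
    case 3
    have IH: "(0, bvec (k-2) :: int \<Rightarrow> 'k) \<in> M"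
      using less 3 n1 by (intro less) auto
    have "(0, bvec k :: int \<Rightarrow> 'k) = pscale (1 / of_int (k-1-2*n)) ((0, brUV (k-2-n) n) + pscale (4 * of_int (k-2-2*n)) (0, bvec (k-2)))"
      using relV3[OF 3, where 'k='k] by simp
    also have "\<dots> \<in> M"
      using gen[of "k-2-n" n] 3 IH less.prems
      by (intro ps.subspace_scale[OF M] ps.subspace_add[OF M]) auto
    finally show ?thesis .
  qed
qed




lemma suppf_psi: "suppf (psi n f) \<subseteq> {n..2*n}"
  by (auto simp: suppf_def psi_def split: if_splits)

lemma psi_bvec_low: "n \<le> k \<Longrightarrow> k \<le> 2*n \<Longrightarrow> psi n (bvec k) = (bvec k :: int \<Rightarrow> 'k::field)"
  by (auto simp: psi_def bvec_def fun_eq_iff)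

lemma psi_bvec_high: "2*n < k \<Longrightarrow> psi n (bvec k) = (0 :: int \<Rightarrow> 'k::field)"
  by (auto simp: psi_def bvec_def fun_eq_iff)

lemma BB_coords:
  assumes "x \<in> (\<lambda>i. (bvec i, 0)) ` I1 \<union> (\<lambda>i. (0, bvec i)) ` I2"
  shows "fst x i = (if x = (bvec i, 0) then 1 else (0::'k::field))"
    and "snd x i = (if x = (0, bvec i) then 1 else (0::'k::field))"
proof -
  from assms consider a where "x = (bvec a, 0)" | a where "x = (0, bvec a)" by auto
  then have "fst x i = (if x = (bvec i, 0) then 1 else (0::'k::field)) \<and> snd x i = (if x = (0, bvec i) then 1 else (0::'k::field))"
  proof cases
    case 1
    have e: "bvec a i = (if a = i then 1 else (0::'k))" by (simp add: bvec_def)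
    show ?thesis using 1 bvec_nz[of a, where 'k='k] by (simp add: bvec_eq e)
  next
    case 2
    have e: "bvec a i = (if a = i then 1 else (0::'k))" by (simp add: bvec_def)
    show ?thesis using 2 bvec_nz[of i, where 'k='k] by (simp add: bvec_eq e)
  qed
  then show "fst x i = (if x = (bvec i, 0) then 1 else (0::'k::field))"
    and "snd x i = (if x = (0, bvec i) then 1 else (0::'k::field))" by auto
qed

lemma indep_BB: "\<not> ps.dependent ((\<lambda>i. (bvec i, 0)) ` I1 \<union> (\<lambda>i. (0, bvec i)) ` I2 :: ((int \<Rightarrow> 'k::field) \<times> (int \<Rightarrow> 'k)) set)"
  unfolding ps.dependent_explicit
proof clarify
  let ?B = "(\<lambda>i. (bvec i, 0)) ` I1 \<union> (\<lambda>i. (0, bvec i)) ` I2 :: ((int \<Rightarrow> 'k) \<times> (int \<Rightarrow> 'k)) set"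
  fix t u v assume t: "finite t" "t \<subseteq> ?B" and s: "(\<Sum>v\<in>t. pscale (u v) v) = 0"
    and v: "v \<in> t" and uv: "u v \<noteq> 0"
  have vB: "v \<in> ?B" using v t by auto
  then consider i where "v = (bvec i, 0)" | i where "v = (0, bvec i)" by auto
  then show False
  proof cases
    case 1
    have "0 = fst (\<Sum>v\<in>t. pscale (u v) v) i" using s by simp
    also have "\<dots> = (\<Sum>x\<in>t. if x = v then u v else 0)"
      unfolding fst_sum sum_apply_fun
    proof (rule sum.cong)
      fix x assume "x \<in> t"
      then have xB: "x \<in> ?B" using t by auto
      have "fst x i = (if x = v then 1 else 0)" using BB_coords(1)[OF xB, of i] 1 by simp
      then show "fst (pscale (u x) x) i = (if x = v then u v else 0)"
        by (auto simp: pscale_def fscale_def)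
    qed simp
    also have "\<dots> = u v" using t v by simp
    finally show False using uv by simp
  next
    case 2
    have "0 = snd (\<Sum>v\<in>t. pscale (u v) v) i" using s by simp
    also have "\<dots> = (\<Sum>x\<in>t. if x = v then u v else 0)"
      unfolding snd_sum sum_apply_fun
    proof (rule sum.cong)
      fix x assume "x \<in> t"
      then have xB: "x \<in> ?B" using t by auto
      have "snd x i = (if x = v then 1 else 0)" using BB_coords(2)[OF xB, of i] 2 by simp
      then show "snd (pscale (u x) x) i = (if x = v then u v else 0)"
        by (auto simp: pscale_def fscale_def)
    qed simp
    also have "\<dots> = u v" using t v by simp
    finally show False using uv by simp
  qed
qed

lemma card_BB:
  assumes "-1 \<le> n"
  shows "card ((\<lambda>i. (bvec i, 0)) ` {n..2*n+2} \<union> (\<lambda>i. (0, bvec i)) ` {n..2*n} :: ((int \<Rightarrow> 'k::field) \<times> (int \<Rightarrow> 'k)) set) = nat (2*n+4)"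
proof -
  have i1: "inj (\<lambda>i. (bvec i :: int \<Rightarrow> 'k, 0 :: int \<Rightarrow> 'k))" by (auto intro!: injI simp: bvec_eq)
  have i2: "inj (\<lambda>i. (0 :: int \<Rightarrow> 'k, bvec i :: int \<Rightarrow> 'k))" by (auto intro!: injI simp: bvec_eq)
  have disj: "(\<lambda>i. (bvec i, 0)) ` {n..2*n+2} \<inter> (\<lambda>i. (0, bvec i)) ` {n..2*n} = ({} :: ((int \<Rightarrow> 'k) \<times> (int \<Rightarrow> 'k)) set)"
    using bvec_nz[where 'k='k] by auto
  have "card ((\<lambda>i. (bvec i, 0)) ` {n..2*n+2} \<union> (\<lambda>i. (0, bvec i)) ` {n..2*n} :: ((int \<Rightarrow> 'k) \<times> (int \<Rightarrow> 'k)) set)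
      = card ((\<lambda>i. (bvec i, 0)) ` {n..2*n+2} :: ((int \<Rightarrow> 'k) \<times> (int \<Rightarrow> 'k)) set) + card ((\<lambda>i. (0, bvec i)) ` {n..2*n} :: ((int \<Rightarrow> 'k) \<times> (int \<Rightarrow> 'k)) set)"
    by (rule card_Un_disjoint) (use disj in auto)
  also have "\<dots> = nat (n+3) + nat (n+1)"
    using card_image[OF inj_on_subset[OF i1 subset_UNIV], of "{n..2*n+2}"]
      card_image[OF inj_on_subset[OF i2 subset_UNIV], of "{n..2*n}"] by (simp add: add.commute)
  also have "\<dots> = nat (2*n+4)" using assms by simp
  finally show ?thesis .
qed




lemma brB_UU: "brB (bvec a, 0) (bvec b, 0) = (brO (bvec a) (bvec b), 0 :: int \<Rightarrow> 'k::field)"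
  by (simp add: brB_def)

lemma brB_UV: "brB (bvec a, 0) (0, bvec b) = (0, brUV a b :: int \<Rightarrow> 'k::field)"
  by (simp add: brB_def actOP_bvec)

lemma dimB:
  assumes n1: "-1 \<le> n"
  shows "quot_dim (pscale :: 'k::field_char_0 \<Rightarrow> _) (Fb n) (derived pscale brB (Fb n)) = nat (2 * n + 4)"
proof -
  let ?G = "{(bvec k, 0) |k. k \<ge> n} \<union> {(0, bvec k) |k. k \<ge> n} :: ((int \<Rightarrow> 'k) \<times> (int \<Rightarrow> 'k)) set"
  let ?H = "{brB x y |x y. x \<in> Fb n \<and> y \<in> Fb n} :: ((int \<Rightarrow> 'k) \<times> (int \<Rightarrow> 'k)) set"
  let ?D = "{p :: (int \<Rightarrow> 'k) \<times> (int \<Rightarrow> 'k). finite (suppf (fst p)) \<and> finite (suppf (snd p))}"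
  let ?B = "(\<lambda>i. (bvec i, 0)) ` {n..2*n+2} \<union> (\<lambda>i. (0, bvec i)) ` {n..2*n} :: ((int \<Rightarrow> 'k) \<times> (int \<Rightarrow> 'k)) set"
  have FbG: "Fb n = ps.span ?G" by (simp add: Fb_def)
  have Gin: "g \<in> Fb n" if "g \<in> ?G" for g
    unfolding FbG using that by (rule ps.span_base)
  have "quot_dim pscale (ps.span ?G) (ps.span ?H) = nat (2*n+4)"
  proof (rule ps.quot_dim_proj[where D = ?D and \<phi> = "phiB n" and B = ?B])
    show "ps.subspace ?D"
    proof (rule ps.subspaceI)
      fix x y :: "(int \<Rightarrow> 'k) \<times> (int \<Rightarrow> 'k)" assume "x \<in> ?D" "y \<in> ?D"
      then show "x + y \<in> ?D"
        using suppf_add[of "fst x" "fst y"] suppf_add[of "snd x" "snd y"] by (auto intro: finite_subset)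
    next
      fix c and x :: "(int \<Rightarrow> 'k) \<times> (int \<Rightarrow> 'k)" assume "x \<in> ?D"
      then show "pscale c x \<in> ?D"
        using suppf_fscale[of c "fst x"] suppf_fscale[of c "snd x"] by (auto simp: pscale_def intro: finite_subset)
    qed (simp add: zero_prod_def)
    show "?G \<subseteq> ?D" by auto
    show "?H \<subseteq> ?D"
    proof
      fix h assume "h \<in> ?H"
      then obtain x y where h: "h = brB x y" by auto
      have "finite (suppf (actOP (fst x) (snd y) - actOP (fst y) (snd x)))"
        by (rule finite_subset[OF suppf_diff]) (simp add: fin_actOP)
      then show "h \<in> ?D" unfolding h brB_def using fin_brO by simp
    qed
    show "phiB n (x + y) = phiB n x + phiB n y" if "x \<in> ?D" "y \<in> ?D" for x y
      using that by (simp add: phiB_def phiO_add psi_add)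
    show "phiB n (pscale c x) = pscale c (phiB n x)" if "x \<in> ?D" for c x
      using that by (simp add: phiB_def pscale_def phiO_scale psi_scale)
    show "phiB n h = 0" if "h \<in> ?H" for h
    proof -
      obtain x y where h: "h = brB x y" and x: "x \<in> Fb n" and y: "y \<in> Fb n" using \<open>h \<in> ?H\<close> by auto
      show ?thesis unfolding h brB_def phiB_def
        using Fb_supp[OF x] Fb_supp[OF y]
        by (simp add: phiO_brO psi_diff psi_actOP zero_prod_def)
    qed
    have HB: "brB x y \<in> ps.span ?H" if "x \<in> Fb n" "y \<in> Fb n" for x y
      using that by (intro ps.span_base CollectI exI[of _ x] exI[of _ y]) simp
    show "g - phiB n g \<in> ps.span ?H" if gG: "g \<in> ?G" for g
    proof -
      from gG consider k where "g = (bvec k, 0)" "n \<le> k" | k where "g = (0, bvec k)" "n \<le> k" by auto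
      then show ?thesis
      proof cases
        case 1
        let ?M = "{f. (f, 0) \<in> ps.span ?H}"
        have M: "fs.subspace ?M"
        proof (rule fs.subspaceI)
          show "0 \<in> ?M" using ps.span_zero by (simp add: zero_prod_def)
          fix x y assume "x \<in> ?M" "y \<in> ?M"
          then show "x + y \<in> ?M" using ps.span_add[of "(x,0)" ?H "(y,0)"] by simp
        next
          fix c x assume "x \<in> ?M"
          then show "fscale c x \<in> ?M" using ps.span_scale[of "(x,0)" ?H c] by simp
        qed
        have "bvec k - phiO n (bvec k) \<in> ?M"
        proof (rule resO[OF M _ 1(2) n1])
          fix k' :: int assume k': "2*n+3 \<le> k'"
          have "(bvec k' - fscale 4 (bvec (k'-2)), 0 :: int \<Rightarrow> 'k) = pscale (1 / of_int (k'-2-2*n)) (brB (bvec (k'-2-n), 0) (bvec n, 0))"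
            unfolding relO[OF k', where 'k='k] brB_UU by simp
          also have "\<dots> \<in> ps.span ?H"
            using k' n1 by (intro ps.span_scale HB Gin) auto
          finally show "bvec k' - fscale 4 (bvec (k'-2)) \<in> ?M" by simp
        qed
        then show ?thesis using 1 by (simp add: phiB_def)
      next
        case 2
        show ?thesis
        proof (cases "k \<le> 2*n")
          case True
          then show ?thesis using 2 psi_bvec_low[of n k, where 'k='k] ps.span_zero by (simp add: phiB_def zero_prod_def)
        next
          case False
          have "(0, bvec k) \<in> ps.span ?H"
          proof (rule resV[OF ps.subspace_span _ _ n1])
            fix a b assume "n \<le> a" "n \<le> b"
            then show "(0, brUV a b) \<in> ps.span ?H"
              unfolding brB_UV[symmetric] by (intro HB Gin) auto
          qed (use False in simp)
          then show ?thesis using 2 False psi_bvec_high[of n k, where 'k='k] by (simp add: phiB_def)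
        qed
      qed
    qed
    show "phiB n g \<in> ps.span ?B" if "g \<in> ?G" for g
      unfolding phiB_def by (rule in_span_pair[OF _ suppf_phiO _ suppf_psi]) auto
    show "?B \<subseteq> ps.span ?G" by (auto intro!: ps.span_base)
    show "finite ?B" by simp
    show "\<not> ps.dependent ?B" by (rule indep_BB)
    show "card ?B = nat (2*n+4)" by (rule card_BB[OF n1])
    show "phiB n b = b" if "b \<in> ?B" for b
      using that phiO_bvec_low psi_bvec_low by (auto simp: phiB_def)
  qed
  then show ?thesis unfolding derived_def FbG by simp
qed


theorem proposition5p7:
  fixes n :: int
  assumes "n \<ge> -1"
  shows "quot_dim (fscale :: 'k::field_char_0 \<Rightarrow> _) (FO n) (derived fscale brO (FO n)) = nat (n + 3)
    \<and> quot_dim (pscale :: 'k::field_char_0 \<Rightarrow> _) (Fb n) (derived pscale brB (Fb n)) = nat (2 * n + 4)"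
  using dimO[OF assms] dimB[OF assms] by simp

end
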